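(* For any $w \in \{b,\beta\}^*$ such that $\varphi_w$ is primitive, the set $C(w) = \{\varphi_v : v = \mathrm{cyc}^k(w),\ k\in\mathbb{N}\}$ is closed under derivation.
   Context: Morphisms on $\{0,1\}^*$: $\varphi_b: 0 \mapsto 0, 1\mapsto 01$; $\varphi_\beta: 0\mapsto 10, 1 \mapsto 1$ (also $\varphi_a: 0\mapsto 0,1\mapsto 10$, $\varphi_\alpha: 0\mapsto 01, 1\mapsto 1$); for $w=w_0\cdots w_{m-1}$, $\varphi_w = \varphi_{w_0}\circ\cdots\circ\varphi_{w_{m-1}}$. For a word $u = u_0u_1\cdots u_{n-1}$, $\mathrm{cyc}(u) = u_1\cdots u_{n-1}u_0$. A morphism is primitive if some power maps every letter to a word containing every letter; a substitution is a morphism $\psi$ with a letter $c$ such that $\psi(c)=cx$, $x$ nonempty, $|\psi^n(c)|\to\infty$. Derived word: for a uniformly recurrent word $\mathbf{u}$ and a factor $v$, a return word of $v$ is a factor $r$ such that $rv$ is a factor in which $v$ occurs exactly twice (as prefix and suffix); if $r_0,\dots,r_k$ are all return words, write $\mathbf{u}=p\,r_{s_0}r_{s_1}\cdots$ with $|p|$ the first occurrence of $v$; $\mathbf{d}_{\mathbf{u}}(v)=s_0s_1\cdots$, up to permutation of letters. A finite set $M$ of primitive substitutions is closed under derivation if for every $\varphi\in M$, every fixed point $\mathbf{u}$ of $\varphi$ and every factor $v$ of $\mathbf{u}$, $\mathbf{d}_{\mathbf{u}}(v)$ is fixed by some $\psi\in M$. *)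

theory Defs
  imports Main
begin

text \<open>Letters are natural numbers; the binary alphabet is {0,1}.  A morphism on
  {0,1}* is represented by its letter images (only the values at 0 and 1 matter).
  Infinite words are functions nat => nat.\<close>

type_synonym morph = "nat \<Rightarrow> nat list"

definition ext :: "morph \<Rightarrow> nat list \<Rightarrow> nat list" where
  "ext f xs = concat (map f xs)"

definition mcomp :: "morph \<Rightarrow> morph \<Rightarrow> morph" where
  "mcomp f g = (\<lambda>c. ext f (g c))"

definition mid :: morph where
  "mid = (\<lambda>c. [c])"

fun mpow :: "morph \<Rightarrow> nat \<Rightarrow> morph" where
  "mpow f 0 = mid"
| "mpow f (Suc n) = mcomp f (mpow f n)"

datatype gen = Ga | Gb | Galpha | Gbeta

fun gen_morph :: "gen \<Rightarrow> morph" where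
  "gen_morph Gb = (\<lambda>c. if c = 0 then [0] else [0,1])"
| "gen_morph Gbeta = (\<lambda>c. if c = 0 then [1,0] else [1])"
| "gen_morph Ga = (\<lambda>c. if c = 0 then [0] else [1,0])"
| "gen_morph Galpha = (\<lambda>c. if c = 0 then [0,1] else [1])"

fun phi :: "gen list \<Rightarrow> morph" where
  "phi [] = mid"
| "phi (x # xs) = mcomp (gen_morph x) (phi xs)"

definition primitive :: "morph \<Rightarrow> bool" where
  "primitive f \<longleftrightarrow> (\<exists>n. \<forall>a<2. \<forall>b<2. b \<in> set (mpow f n a))"

definition substitution :: "morph \<Rightarrow> bool" where
  "substitution f \<longleftrightarrow> (\<exists>c<2. \<exists>x. x \<noteq> [] \<and> f c = c # x \<and>
      filterlim (\<lambda>n. length (mpow f n c)) at_top sequentially)"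

text \<open>u is a fixed point of f: u is an infinite word over {0,1} with f(u) = u,
  i.e. the images of prefixes of u are prefixes of u and their lengths are unbounded.\<close>
definition fixed_point :: "morph \<Rightarrow> (nat \<Rightarrow> nat) \<Rightarrow> bool" where
  "fixed_point f u \<longleftrightarrow> (\<forall>i. u i < 2) \<and>
     (\<forall>n. ext f (map u [0..<n]) = map u [0..<length (ext f (map u [0..<n]))]) \<and>
     (\<forall>N. \<exists>n. N < length (ext f (map u [0..<n])))"

definition occurs_at :: "(nat \<Rightarrow> nat) \<Rightarrow> nat list \<Rightarrow> nat \<Rightarrow> bool" where
  "occurs_at u v i \<longleftrightarrow> map u [i..<i + length v] = v"

definition factor :: "nat list \<Rightarrow> (nat \<Rightarrow> nat) \<Rightarrow> bool" where
  "factor v u \<longleftrightarrow> (\<exists>i. occurs_at u v i)"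

definition occ_count :: "nat list \<Rightarrow> nat list \<Rightarrow> nat" where
  "occ_count v x = card {i. i + length v \<le> length x \<and> take (length v) (drop i x) = v}"

definition return_word :: "(nat \<Rightarrow> nat) \<Rightarrow> nat list \<Rightarrow> nat list \<Rightarrow> bool" where
  "return_word u v r \<longleftrightarrow> factor (r @ v) u \<and> take (length v) (r @ v) = v
      \<and> occ_count v (r @ v) = 2"

text \<open>s is a derived word d_u(v) (up to permutation of letters): for some
  enumeration rs = r_0,...,r_k of all return words of v,
  u = p r_{s_0} r_{s_1} ... with |p| the first occurrence of v.\<close>
definition derived :: "(nat \<Rightarrow> nat) \<Rightarrow> nat list \<Rightarrow> (nat \<Rightarrow> nat) \<Rightarrow> bool" where
  "derived u v s \<longleftrightarrow> (\<exists>rs. distinct rs \<and> set rs = {r. return_word u v r} \<and>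
      (\<forall>j. s j < length rs) \<and>
      (let p = (LEAST i. occurs_at u v i) in
        \<forall>n. map u [p..<p + length (concat (map (\<lambda>j. rs ! s j) [0..<n]))]
             = concat (map (\<lambda>j. rs ! s j) [0..<n])))"

definition closed_under_derivation :: "morph set \<Rightarrow> bool" where
  "closed_under_derivation M \<longleftrightarrow> finite M \<and>
     (\<forall>f\<in>M. primitive f \<and> substitution f) \<and>
     (\<forall>f\<in>M. \<forall>u. fixed_point f u \<longrightarrow> (\<forall>v. factor v u \<longrightarrow>
        (\<exists>s. derived u v s \<and> (\<exists>g\<in>M. fixed_point g s))))"

end

theory Submission
  imports Defs
begin

lemma ext_Nil[simp]: "ext f [] = []" by (simp add: ext_def)
lemma ext_Cons[simp]: "ext f (c # xs) = f c @ ext f xs" by (simp add: ext_def)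
lemma ext_append[simp]: "ext f (xs @ ys) = ext f xs @ ext f ys" by (simp add: ext_def)
lemma ext_mcomp: "ext (mcomp f g) xs = ext f (ext g xs)"
  by (induction xs) (auto simp: mcomp_def)

definition ne :: "morph \<Rightarrow> bool" where "ne f \<longleftrightarrow> (\<forall>c. f c \<noteq> [])"

lemma length_ext_ge: "ne f \<Longrightarrow> length xs \<le> length (ext f xs)"
proof (induction xs)
  case (Cons c xs)
  then have "f c \<noteq> []" by (simp add: ne_def)
  then show ?case using Cons by (cases "f c") auto
qed simp

lemma seg_split: "i \<le> j \<Longrightarrow> j \<le> k \<Longrightarrow> map u [i..<k] = map u [i..<j] @ map u [j..<k]"
  using upt_add_eq_append[of i j "k - j"] by simp

lemma app_nth: "i < length xs \<Longrightarrow> (xs @ ys) ! i = xs ! i" by (simp add: nth_append)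

definition img :: "morph \<Rightarrow> (nat \<Rightarrow> nat) \<Rightarrow> nat \<Rightarrow> nat" where
  "img f u i = ext f (map u [0..<Suc i]) ! i"

lemma img_pre:
  assumes "ne f"
  shows "map (img f u) [0..<length (ext f (map u [0..<n]))] = ext f (map u [0..<n])"
proof (rule nth_equalityI)
  fix i assume i: "i < length (map (img f u) [0..<length (ext f (map u [0..<n]))])"
  then have i': "i < length (ext f (map u [0..<n]))" by simp
  have L: "Suc i \<le> length (ext f (map u [0..<Suc i]))"
    using length_ext_ge[OF assms, of "map u [0..<Suc i]"] by simp
  have "ext f (map u [0..<Suc i]) ! i = ext f (map u [0..<n]) ! i"
  proof (cases "Suc i \<le> n")
    case True
    then have "map u [0..<n] = map u [0..<Suc i] @ map u [Suc i..<n]" by (rule seg_split[rotated]) simp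
    then show ?thesis using L by (simp only: ext_append app_nth)
  next
    case False
    then have "map u [0..<Suc i] = map u [0..<n] @ map u [n..<Suc i]" by (intro seg_split) simp_all
    then show ?thesis using i' by (simp only: ext_append app_nth)
  qed
  then show "map (img f u) [0..<length (ext f (map u [0..<n]))] ! i = ext f (map u [0..<n]) ! i"
    using i' by (simp add: img_def)
qed simp

lemma pre_eq_nth: "map x [0..<L] = map y [0..<L] \<Longrightarrow> i < L \<Longrightarrow> x i = y i"
proof -
  assume a: "map x [0..<L] = map y [0..<L]" and i: "i < L"
  have "map x [0..<L] ! i = map y [0..<L] ! i" by (simp only: a)
  then show ?thesis using i by simp
qed

lemma fixed_point_iff:
  assumes "ne f"
  shows "fixed_point f u \<longleftrightarrow> (\<forall>i. u i < 2) \<and> img f u = u"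
proof
  assume fp: "fixed_point f u"
  have "img f u i = u i" for i
  proof -
    have L: "Suc i \<le> length (ext f (map u [0..<Suc i]))"
      using length_ext_ge[OF assms, of "map u [0..<Suc i]"] by simp
    have "map (img f u) [0..<length (ext f (map u [0..<Suc i]))] = map u [0..<length (ext f (map u [0..<Suc i]))]"
      using img_pre[OF assms] fp unfolding fixed_point_def by metis
    then show ?thesis using pre_eq_nth L by (metis Suc_le_lessD)
  qed
  moreover have "\<forall>i. u i < 2" using fp unfolding fixed_point_def by blast
  ultimately show "(\<forall>i. u i < 2) \<and> img f u = u" by auto
next
  assume "(\<forall>i. u i < 2) \<and> img f u = u"
  then have a: "\<forall>i. u i < 2" and b: "img f u = u" by auto
  show "fixed_point f u" unfolding fixed_point_def
  proof (intro conjI)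
    show "\<forall>i. u i < 2" by (rule a)
  next
    show "\<forall>n. ext f (map u [0..<n]) = map u [0..<length (ext f (map u [0..<n]))]"
    proof fix n show "ext f (map u [0..<n]) = map u [0..<length (ext f (map u [0..<n]))]"
      using img_pre[OF assms, of u n] b by simp
    qed
  next
    show "\<forall>N. \<exists>n. N < length (ext f (map u [0..<n]))"
    proof fix N show "\<exists>n. N < length (ext f (map u [0..<n]))"
      using length_ext_ge[OF assms, of "map u [0..<Suc N]"] by (intro exI[of _ "Suc N"]) simp
    qed
  qed
qed

lemma ne_mcomp: "ne f \<Longrightarrow> ne g \<Longrightarrow> ne (mcomp f g)"
  unfolding ne_def mcomp_def
proof (intro allI)
  fix c assume f: "\<forall>c. f c \<noteq> []" and g: "\<forall>c. g c \<noteq> []"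
  obtain d r where "g c = d # r" using g by (meson list.exhaust)
  then show "ext f (g c) \<noteq> []" using f by simp
qed

lemma img_mcomp:
  assumes f: "ne f" and g: "ne g"
  shows "img (mcomp f g) u = img f (img g u)"
proof
  fix i
  define L where "L = length (ext (mcomp f g) (map u [0..<Suc i]))"
  have L: "Suc i \<le> L" unfolding L_def
    using length_ext_ge[OF ne_mcomp[OF f g], of "map u [0..<Suc i]"] by simp
  have 1: "map (img (mcomp f g) u) [0..<L] = ext (mcomp f g) (map u [0..<Suc i])"
    unfolding L_def by (rule img_pre[OF ne_mcomp[OF f g]])
  define L' where "L' = length (ext g (map u [0..<Suc i]))"
  have 2: "ext g (map u [0..<Suc i]) = map (img g u) [0..<L']"
    unfolding L'_def by (rule img_pre[OF g, symmetric])
  have 3: "ext (mcomp f g) (map u [0..<Suc i]) = ext f (map (img g u) [0..<L'])"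
    by (subst ext_mcomp) (simp only: 2)
  have 4: "map (img f (img g u)) [0..<L] = ext f (map (img g u) [0..<L'])"
    using img_pre[OF f, of "img g u" L'] 3 unfolding L_def by simp
  have "map (img (mcomp f g) u) [0..<L] = map (img f (img g u)) [0..<L]" by (simp only: 1 3 4)
  then show "img (mcomp f g) u i = img f (img g u) i"
    by (rule pre_eq_nth) (use L in simp)
qed


fun D :: "nat \<Rightarrow> nat list \<Rightarrow> nat list" where
  "D a [] = []"
| "D a [c] = []"
| "D a (c # d # rest) = (if d = a then a # D a (d # rest) else d # D a rest)"

lemma D_len: "length (D a v) \<le> length v \<and> (v \<noteq> [] \<longrightarrow> length (D a v) < length v)"
  by (induction a v rule: D.induct) auto

locale blk =
  fixes h :: morph and a :: nat and y :: "nat \<Rightarrow> nat"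
  assumes a2: "a < 2"
  and hdef: "\<And>c. c < 2 \<Longrightarrow> h c = (if c = a then [a] else [a, 1 - a])"
  and hne: "ne h"
  and y2: "\<And>i. y i < 2"
begin

definition u where "u = img h y"
definition P where "P j = length (ext h (map y [0..<j]))"

lemma h_Cons: "c < 2 \<Longrightarrow> h c = a # (if c = a then [] else [1 - a])"
  using hdef by simp

lemma pre_u: "map u [0..<P j] = ext h (map y [0..<j])"
  unfolding u_def P_def by (rule img_pre[OF hne])

lemma P_le: "j \<le> j' \<Longrightarrow> P j \<le> P j'"
proof -
  assume "j \<le> j'"
  then have "map y [0..<j'] = map y [0..<j] @ map y [j..<j']" by (intro seg_split) simp_all
  then show ?thesis unfolding P_def by simp
qed

lemma seg_u: "j \<le> j' \<Longrightarrow> map u [P j..<P j'] = ext h (map y [j..<j'])"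
proof -
  assume jj: "j \<le> j'"
  then have "map y [0..<j'] = map y [0..<j] @ map y [j..<j']" by (intro seg_split) simp_all
  then have 1: "map u [0..<P j'] = ext h (map y [0..<j]) @ ext h (map y [j..<j'])"
    using pre_u[of j'] by simp
  have "map u [0..<P j'] = map u [0..<P j] @ map u [P j..<P j']"
    using P_le[OF jj] by (intro seg_split) simp_all
  then show ?thesis using 1 pre_u[of j] by simp
qed

lemma seg_u1: "map u [P j..<P (Suc j)] = h (y j)"
  using seg_u[of j "Suc j"] by simp

lemma P_Suc: "P (Suc j) = P j + length (h (y j))"
  unfolding P_def by simp

lemma u_P: "u (P j) = a"
proof -
  have "P (Suc j) = Suc (P j + length (if y j = a then [] else [1 - a]))"
    using P_Suc h_Cons[OF y2] by simp
  then have "map u [P j..<P (Suc j)] = u (P j) # map u [Suc (P j)..<P (Suc j)]"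
    by (simp add: upt_conv_Cons)
  then show ?thesis using seg_u1 h_Cons[OF y2, of j] by simp
qed

lemma u_P1: "y j \<noteq> a \<Longrightarrow> u (P j + 1) = 1 - a \<and> P (Suc j) = P j + 2"
proof -
  assume ya: "y j \<noteq> a"
  have hy: "h (y j) = [a, 1 - a]" using hdef[OF y2] ya by simp
  then have PS: "P (Suc j) = P j + 2" using P_Suc by simp
  then have m: "map u [P j..<P (Suc j)] = [u (P j), u (P j + 1)]"
    by (simp add: upt_conv_Cons numeral_2_eq_2)
  have "[u (P j), u (P j + 1)] = [a, 1 - a]" using m seg_u1[of j] hy by metis
  then show ?thesis using PS by simp
qed

lemma u_Pa: "y j = a \<Longrightarrow> P (Suc j) = P j + 1"
  using P_Suc hdef[OF y2] by simp

lemma P_smono: "strict_mono P"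
  unfolding strict_mono_Suc_iff
proof
  fix j show "P j < P (Suc j)" using P_Suc h_Cons[OF y2, of j] by simp
qed

lemma P0: "P 0 = 0" unfolding P_def by simp

lemma cover: "\<exists>j. P j \<le> i \<and> i < P (Suc j)"
proof (induction i)
  case 0
  have "P 0 < P (Suc 0)" using P_smono by (simp add: strict_mono_Suc_iff)
  then show ?case using P0 by (intro exI[of _ 0]) simp
next
  case (Suc i)
  then obtain j where j: "P j \<le> i" "i < P (Suc j)" by blast
  show ?case
  proof (cases "Suc i < P (Suc j)")
    case True then show ?thesis using j by (intro exI[of _ j]) simp
  next
    case False
    then have "Suc i = P (Suc j)" using j by simp
    moreover have "P (Suc j) < P (Suc (Suc j))" using P_smono by (simp add: strict_mono_Suc_iff)
    ultimately show ?thesis by (intro exI[of _ "Suc j"]) simp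
  qed
qed

lemma pos_cases: "(\<exists>j. i = P j) \<or> (\<exists>j. i = P j + 1 \<and> y j \<noteq> a)"
proof -
  obtain j where j: "P j \<le> i" "i < P (Suc j)" using cover by blast
  show ?thesis
  proof (cases "y j = a")
    case True
    then have "i = P j" using j u_Pa[OF True] by simp
    then show ?thesis by blast
  next
    case False
    then have "P (Suc j) = P j + 2" using u_P1 by blast
    show ?thesis
    proof (cases "i = P j")
      case True then show ?thesis by blast
    next
      case F2: False
      then have "i = P j + 1" using j \<open>P (Suc j) = P j + 2\<close> by simp
      then show ?thesis using False by blast
    qed
  qed
qed

lemma u_a_iff: "u i = a \<longleftrightarrow> (\<exists>j. i = P j)"
proof
  assume ua: "u i = a"
  show "\<exists>j. i = P j"
  proof (rule ccontr)
    assume "\<not> (\<exists>j. i = P j)"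
    then obtain j where "i = P j + 1" "y j \<noteq> a" using pos_cases[of i] by blast
    then have "u i = 1 - a" using u_P1 by blast
    then show False using ua a2 by arith
  qed
next
  assume "\<exists>j. i = P j"
  then show "u i = a" using u_P by blast
qed

lemma u_na: "u i \<noteq> a \<Longrightarrow> i > 0 \<and> u (i - 1) = a"
proof -
  assume na: "u i \<noteq> a"
  then obtain j where j: "i = P j + 1" using pos_cases[of i] u_P by blast
  then show ?thesis using u_P[of j] by simp
qed

lemma u2: "u i < 2"
proof (cases "u i = a")
  case True then show ?thesis using a2 by simp
next
  case False
  then obtain j where "i = P j + 1" "y j \<noteq> a" using pos_cases[of i] u_P by blast
  then have "u i = 1 - a" using u_P1 by blast
  then show ?thesis by simp
qed

lemma u_na_next: "u i \<noteq> a \<Longrightarrow> u (Suc i) = a"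
proof -
  assume na: "u i \<noteq> a"
  then obtain j where j: "i = P j + 1" "y j \<noteq> a" using pos_cases[of i] u_P by blast
  then have "P (Suc j) = Suc i" using u_P1 by simp
  then show ?thesis using u_P[of "Suc j"] by simp
qed

lemma ext_hd: "\<forall>c\<in>set z. c < 2 \<Longrightarrow> z \<noteq> [] \<Longrightarrow> \<exists>t. ext h z = a # t"
proof -
  assume z2: "\<forall>c\<in>set z. c < 2" and zn: "z \<noteq> []"
  then obtain e zr where z: "z = e # zr" by (cases z) auto
  then have "e < 2" using z2 by simp
  then show ?thesis using z h_Cons[of e] by simp
qed

lemma a_ne: "1 - a \<noteq> a" using a2 by arith

lemma D_prop:
  assumes "\<forall>c\<in>set z. c < 2" "\<forall>c\<in>set z0. c < 2" "length v \<le> length z" "length v \<le> length z0"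
    "take (length v) (ext h z0) = v"
  shows "take (length v) (ext h z) = v \<longleftrightarrow> take (length (D a v)) z = D a v"
using assms
proof (induction "length v" arbitrary: v z z0 rule: less_induct)
  case less
  show ?case
  proof (cases v)
    case Nil then show ?thesis by simp
  next
    case (Cons c v')
    obtain e zr where z: "z = e # zr" using less.prems(3) Cons by (cases z) auto
    obtain e0 zr0 where z0: "z0 = e0 # zr0" using less.prems(4) Cons by (cases z0) auto
    have e: "e < 2" using z less.prems(1) by simp
    have e0: "e0 < 2" using z0 less.prems(2) by simp
    have zr2: "\<forall>c\<in>set zr. c < 2" using z less.prems(1) by simp
    have zr02: "\<forall>c\<in>set zr0. c < 2" using z0 less.prems(2) by simp
    have ca: "c = a" using less.prems(5) z0 Cons h_Cons[OF e0] by simp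
    show ?thesis
    proof (cases v')
      case Nil
      have "take 1 (ext h z) = [a]" using z h_Cons[OF e] by simp
      then show ?thesis using Cons Nil ca by simp
    next
      case (Cons d rest)
      have vv: "v = a # d # rest" using \<open>v = c # v'\<close> Cons ca by simp
      have zrn: "zr \<noteq> []" using less.prems(3) z vv by auto
      have zr0n: "zr0 \<noteq> []" using less.prems(4) z0 vv by auto
      obtain t where t: "ext h zr = a # t" using ext_hd[OF zr2 zrn] by blast
      obtain t0 where t0: "ext h zr0 = a # t0" using ext_hd[OF zr02 zr0n] by blast
      show ?thesis
      proof (cases "d = a")
        case True
        have e0a: "e0 = a"
        proof (rule ccontr)
          assume "e0 \<noteq> a"
          then have "take (length v) (ext h z0) = a # (1 - a) # take (length rest) (ext h zr0)"
            using z0 h_Cons[OF e0] vv by simp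
          then show False using less.prems(5) vv True a_ne by simp
        qed
        have p0: "take (length (d # rest)) (ext h zr0) = d # rest"
          using less.prems(5) vv z0 h_Cons[OF e0] e0a by simp
        have IH: "take (length (d # rest)) (ext h zr) = d # rest \<longleftrightarrow>
            take (length (D a (d # rest))) zr = D a (d # rest)"
          by (rule less.hyps[OF _ zr2 zr02 _ _ p0]) (use vv z z0 less.prems(3,4) in auto)
        show ?thesis
        proof (cases "e = a")
          case True
          then show ?thesis using IH vv z h_Cons[OF e] \<open>d = a\<close> by simp
        next
          case False
          have "take (length v) (ext h z) = a # (1 - a) # take (length rest) (ext h zr)"
            using z h_Cons[OF e] vv False by simp
          then show ?thesis using vv z False \<open>d = a\<close> a_ne by simp
        qed
      next
        case False
        have e0a: "e0 \<noteq> a"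
        proof
          assume "e0 = a"
          then have "take (length v) (ext h z0) = a # a # take (length rest) t0"
            using z0 h_Cons[OF e0] vv t0 by simp
          then show False using less.prems(5) vv False by simp
        qed
        have dd: "d = 1 - a" using less.prems(5) vv z0 h_Cons[OF e0] e0a by simp
        have p0: "take (length rest) (ext h zr0) = rest"
          using less.prems(5) vv z0 h_Cons[OF e0] e0a by simp
        have IH: "take (length rest) (ext h zr) = rest \<longleftrightarrow>
            take (length (D a rest)) zr = D a rest"
          by (rule less.hyps[OF _ zr2 zr02 _ _ p0]) (use vv z z0 less.prems(3,4) in auto)
        show ?thesis
        proof (cases "e = a")
          case True
          have "take (length v) (ext h z) = a # a # take (length rest) t"
            using z h_Cons[OF e] vv t True by simp
          then show ?thesis using vv z True False by simp
        next
          case ea: False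
          then have "e = 1 - a" using e a2 by arith
          then show ?thesis using IH vv z h_Cons[OF e] ea False dd by simp
        qed
      qed
    qed
  qed
qed

lemma P_add: "P j + n \<le> P (j + n)"
proof (induction n)
  case (Suc n)
  have "P (j + n) < P (Suc (j + n))" using P_smono by (simp add: strict_mono_Suc_iff)
  then show ?case using Suc by simp
qed simp

lemma occ_nth0: "occurs_at w v i \<Longrightarrow> v \<noteq> [] \<Longrightarrow> w i = v ! 0"
proof -
  assume e: "occurs_at w v i" and vn: "v \<noteq> []"
  have "map w [i..<i + length v] ! 0 = v ! 0" using e unfolding occurs_at_def by (simp only:)
  then show ?thesis using vn by simp
qed

lemma occ_P:
  assumes v0: "occurs_at u v (P j0)"
  shows "occurs_at u v (P j) \<longleftrightarrow> occurs_at y (D a v) j"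
proof -
  define Z where "Z j = map y [j..<j + length v]" for j
  have Z2: "\<forall>c\<in>set (Z j). c < 2" for j unfolding Z_def using y2 by auto
  have ZL: "length (Z j) = length v" for j unfolding Z_def by simp
  have U: "map u [P j..<P j + length v] = take (length v) (ext h (Z j))" for j
  proof -
    have "map u [P j..<P (j + length v)] = ext h (Z j)" unfolding Z_def by (rule seg_u) simp
    moreover have "take (length v) [P j..<P (j + length v)] = [P j..<P j + length v]"
      using P_add[of j "length v"] by (simp add: take_upt)
    ultimately show ?thesis by (metis take_map)
  qed
  have Y: "map y [j..<j + length (D a v)] = take (length (D a v)) (Z j)" for j
    unfolding Z_def using D_len[of a v] by (simp add: take_map take_upt)
  have p0: "take (length v) (ext h (Z j0)) = v" using v0 U unfolding occurs_at_def by simp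
  have "take (length v) (ext h (Z j)) = v \<longleftrightarrow> take (length (D a v)) (Z j) = D a v"
    by (rule D_prop[OF Z2 Z2]) (use ZL p0 in auto)
  then show ?thesis unfolding occurs_at_def using U Y by simp
qed

lemma occ0:
  assumes f: "factor v u" and vn: "v \<noteq> []" and va: "v ! 0 = a"
  shows "occurs_at u v i \<longleftrightarrow> (\<exists>j. i = P j \<and> occurs_at y (D a v) j)"
proof -
  obtain i0 where i0: "occurs_at u v i0" using f unfolding factor_def by blast
  have "u i0 = a" using occ_nth0[OF i0 vn] va by simp
  then obtain j0 where j0: "i0 = P j0" using u_a_iff by blast
  note X = occ_P[OF i0[unfolded j0]]
  show ?thesis
  proof
    assume o: "occurs_at u v i"
    have "u i = a" using occ_nth0[OF o vn] va by simp
    then obtain j where "i = P j" using u_a_iff by blast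
    then show "\<exists>j. i = P j \<and> occurs_at y (D a v) j" using X o by blast
  next
    assume "\<exists>j. i = P j \<and> occurs_at y (D a v) j"
    then show "occurs_at u v i" using X by blast
  qed
qed

lemma occ_shift: "occurs_at w (c # v) i \<longleftrightarrow> w i = c \<and> occurs_at w v (Suc i)"
  unfolding occurs_at_def by (simp del: upt_Suc add: upt_conv_Cons)

lemma occ1:
  assumes f: "factor v u" and vn: "v \<noteq> []" and va: "v ! 0 \<noteq> a"
  shows "occurs_at u v i \<longleftrightarrow> (\<exists>j. i = P j + 1 \<and> occurs_at y (D a (a # v)) j)"
proof -
  have key: "occurs_at u v i \<longleftrightarrow> i > 0 \<and> occurs_at u (a # v) (i - 1)" for i
  proof
    assume o: "occurs_at u v i"
    have "u i \<noteq> a" using occ_nth0[OF o vn] va by simp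
    then have "i > 0" "u (i - 1) = a" using u_na by auto
    then show "i > 0 \<and> occurs_at u (a # v) (i - 1)" using o occ_shift by simp
  next
    assume "i > 0 \<and> occurs_at u (a # v) (i - 1)"
    then show "occurs_at u v i" using occ_shift[of u a v "i - 1"] by simp
  qed
  obtain i0 where "occurs_at u v i0" using f unfolding factor_def by blast
  then have f2: "factor (a # v) u" using key unfolding factor_def by blast
  show ?thesis
  proof
    assume "occurs_at u v i"
    then have "i > 0" "occurs_at u (a # v) (i - 1)" using key by auto
    then obtain j where "i - 1 = P j" "occurs_at y (D a (a # v)) j" using occ0[OF f2] by auto
    then show "\<exists>j. i = P j + 1 \<and> occurs_at y (D a (a # v)) j" using \<open>i > 0\<close>
      by (intro exI[of _ j]) simp
  next
    assume "\<exists>j. i = P j + 1 \<and> occurs_at y (D a (a # v)) j"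
    then obtain j where j: "i = P j + 1" "occurs_at y (D a (a # v)) j" by blast
    then have "occurs_at u (a # v) (P j)" using occ0[OF f2] by auto
    then show "occurs_at u v i" using key j by simp
  qed
qed

lemma seg1:
  assumes "j < j'"
  shows "map u [P j + 1..<P j' + 1] = tl (ext h (map y [j..<j'])) @ [a]"
proof -
  have lt: "P j < P j'" using P_smono assms by (simp add: strict_mono_less)
  have e1: "map u [P j..<P j' + 1] = map u [P j..<P j'] @ [u (P j')]" using lt by simp
  have e2: "map u [P j..<P j' + 1] = u (P j) # map u [P j + 1..<P j' + 1]"
    using lt by (simp del: upt_Suc add: upt_conv_Cons)
  have "map u [P j + 1..<P j' + 1] = tl (map u [P j..<P j' + 1])" by (simp only: e2 list.sel(3))
  also have "\<dots> = tl (map u [P j..<P j'] @ [u (P j')])" by (simp only: e1)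
  finally have "map u [P j + 1..<P j' + 1] = tl (map u [P j..<P j'] @ [u (P j')])" .
  also have "\<dots> = tl (map u [P j..<P j']) @ [a]" using lt u_P by simp
  finally show ?thesis using seg_u assms by simp
qed

lemma ext_last: "c < 2 \<Longrightarrow> last (h c) = c"
  using hdef[of c] a2 by auto

lemma ext_inj: "\<forall>c\<in>set z. c < 2 \<Longrightarrow> \<forall>c\<in>set z'. c < 2 \<Longrightarrow> ext h z = ext h z' \<Longrightarrow> z = z'"
proof (induction z arbitrary: z' rule: rev_induct)
  case Nil
  then show ?case using hne unfolding ne_def by (cases z') auto
next
  case (snoc c zs)
  have "z' \<noteq> []" using snoc.prems(3) hne unfolding ne_def by auto
  then obtain zs' c' where z': "z' = zs' @ [c']" by (metis rev_exhaust)
  have c2: "c < 2" "c' < 2" using snoc.prems z' by auto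
  have hn: "h c \<noteq> []" "h c' \<noteq> []" using hne unfolding ne_def by auto
  have "last (ext h (zs @ [c])) = c" using ext_last[OF c2(1)] hn by simp
  moreover have "last (ext h z') = c'" using ext_last[OF c2(2)] hn z' by simp
  ultimately have cc: "c = c'" using snoc.prems(3) by simp
  then have "ext h zs = ext h zs'" using snoc.prems(3) z' by simp
  then have "zs = zs'" using snoc.IH snoc.prems z' by simp
  then show ?case using cc z' by simp
qed

end

definition Inv :: "(nat \<Rightarrow> nat) \<Rightarrow> nat list \<Rightarrow> morph \<Rightarrow> bool" where
  "Inv u v g \<longleftrightarrow> (\<exists>oc R s. strict_mono oc \<and> range oc = {i. occurs_at u v i} \<and>
     (\<forall>k. map u [oc k..<oc (Suc k)] = R (s k)) \<and> R 0 \<noteq> R 1 \<and> fixed_point g s \<and>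
     (\<exists>k. s k = 0) \<and> (\<exists>k. s k = 1))"

context blk
begin

definition X where "X v = (if v ! 0 = a then D a v else D a (a # v))"

lemma occX: "factor v u \<Longrightarrow> v \<noteq> [] \<Longrightarrow>
   occurs_at u v i \<longleftrightarrow> (\<exists>j. i = P j + (if v ! 0 = a then 0 else 1) \<and> occurs_at y (X v) j)"
  unfolding X_def using occ0 occ1 by (cases "v ! 0 = a") auto

lemma X_factor: "factor v u \<Longrightarrow> v \<noteq> [] \<Longrightarrow> factor (X v) y"
  using occX unfolding factor_def by blast

lemma X_len: "v \<noteq> [] \<Longrightarrow> v ! 0 < 2 \<Longrightarrow> length (X v) < length v \<or> (v = [1 - a] \<and> X v = [1 - a])"
proof -
  assume vn: "v \<noteq> []" and v2: "v ! 0 < 2"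
  show ?thesis
  proof (cases "v ! 0 = a")
    case True then show ?thesis using D_len[of a v] vn unfolding X_def by simp
  next
    case False
    obtain c rest where v: "v = c # rest" using vn by (cases v) auto
    have ca: "c \<noteq> a" "c = 1 - a" using False v v2 a2 by auto
    have XX: "X v = c # D a rest" unfolding X_def using False v ca by simp
    show ?thesis
    proof (cases "rest = []")
      case True then show ?thesis using XX v ca by simp
    next
      case False then show ?thesis using XX v D_len[of a rest] by simp
    qed
  qed
qed

lemma X_a: "X [a] = []" unfolding X_def by simp

lemma Inv_transfer:
  assumes f: "factor v u" and vn: "v \<noteq> []" and I: "Inv y (X v) g"
  shows "Inv u v g"
proof -
  obtain oc R s where oc: "strict_mono oc" "range oc = {i. occurs_at y (X v) i}"
    and seg: "\<And>k. map y [oc k..<oc (Suc k)] = R (s k)" and R01: "R 0 \<noteq> R 1"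
    and fp: "fixed_point g s" and s0: "\<exists>k. s k = 0" and s1: "\<exists>k. s k = 1"
    using I unfolding Inv_def by blast
  define \<delta> where "\<delta> = (if v ! 0 = a then 0 else 1::nat)"
  define T where "T z = (if v ! 0 = a then ext h z else tl (ext h z) @ [a])" for z
  define oc' where "oc' k = P (oc k) + \<delta>" for k
  have Tseg: "map u [oc' k..<oc' (Suc k)] = T (map y [oc k..<oc (Suc k)])" for k
  proof -
    have lt: "oc k < oc (Suc k)" using oc(1) by (simp add: strict_mono_Suc_iff)
    show ?thesis
    proof (cases "v ! 0 = a")
      case True then show ?thesis unfolding oc'_def \<delta>_def T_def using seg_u lt by simp
    next
      case False then show ?thesis unfolding oc'_def \<delta>_def T_def using seg1[OF lt] by simp
    qed
  qed
  have nonemp: "map y [oc k..<oc (Suc k)] \<noteq> []" for k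
  proof -
    have "oc k < oc (Suc k)" using oc(1) by (simp add: strict_mono_Suc_iff)
    then show ?thesis by simp
  qed
  have lt2: "\<And>k. \<forall>c\<in>set (map y [oc k..<oc (Suc k)]). c < 2" using y2 by auto
  have Tinj: "T z1 = T z2 \<Longrightarrow> z1 = z2" if zz: "z1 \<noteq> []" "z2 \<noteq> []"
     "\<forall>c\<in>set z1. c < 2" "\<forall>c\<in>set z2. c < 2" for z1 z2
  proof -
    assume TT: "T z1 = T z2"
    have "ext h z1 = ext h z2"
    proof (cases "v ! 0 = a")
      case True then show ?thesis using TT unfolding T_def by simp
    next
      case False
      then have "tl (ext h z1) = tl (ext h z2)" using TT unfolding T_def by simp
      moreover obtain t1 where "ext h z1 = a # t1" using ext_hd zz by blast
      moreover obtain t2 where "ext h z2 = a # t2" using ext_hd zz by blast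
      ultimately show ?thesis by simp
    qed
    then show ?thesis using ext_inj zz by blast
  qed
  obtain k0 where k0: "s k0 = 0" using s0 by blast
  obtain k1 where k1: "s k1 = 1" using s1 by blast
  have TR: "T (R 0) \<noteq> T (R 1)"
  proof
    assume "T (R 0) = T (R 1)"
    then have "R 0 = R 1" using Tinj[of "R 0" "R 1"] seg[of k0] seg[of k1] k0 k1 nonemp lt2 by metis
    then show False using R01 by simp
  qed
  have A1: "strict_mono oc'" unfolding oc'_def
      using oc(1) P_smono by (simp add: strict_mono_def)
    have A2: "range oc' = {i. occurs_at u v i}"
    proof (intro set_eqI iffI)
      fix i assume "i \<in> range oc'"
      then obtain k where "i = oc' k" by blast
      moreover have "occurs_at y (X v) (oc k)" using oc(2) by blast
      ultimately show "i \<in> {i. occurs_at u v i}" using occX[OF f vn] unfolding oc'_def \<delta>_def by auto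
    next
      fix i assume "i \<in> {i. occurs_at u v i}"
      then obtain j where j: "i = P j + \<delta>" "occurs_at y (X v) j" using occX[OF f vn] unfolding \<delta>_def by auto
      then obtain k where "j = oc k" using oc(2) by (metis mem_Collect_eq rangeE)
      then show "i \<in> range oc'" using j unfolding oc'_def by auto
    qed
    have A3: "\<forall>k. map u [oc' k..<oc' (Suc k)] = (T \<circ> R) (s k)" using Tseg seg by simp
    have A4: "(T \<circ> R) 0 \<noteq> (T \<circ> R) 1" using TR by simp
    show ?thesis unfolding Inv_def using A1 A2 A3 A4 fp s0 s1 by blast
qed

end

lemma S_eq:
  assumes "occurs_at u (r @ v) i0"
  shows "{i. i + length v \<le> length (r @ v) \<and> take (length v) (drop i (r @ v)) = v}
       = {i. i \<le> length r \<and> occurs_at u v (i0 + i)}"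
proof -
  have rv: "r @ v = map u [i0..<i0 + length (r @ v)]" using assms unfolding occurs_at_def by simp
  have "take (length v) (drop i (r @ v)) = map u [i0 + i..<i0 + i + length v]" if "i \<le> length r" for i
  proof -
    have "take (length v) (drop i (r @ v)) = take (length v) (drop i (map u [i0..<i0 + length (r @ v)]))"
      using rv by (simp only:)
    also have "\<dots> = map u [i0 + i..<i0 + i + length v]"
      using that by (simp add: drop_map take_map take_upt)
    finally show ?thesis .
  qed
  then show ?thesis unfolding occurs_at_def by auto
qed

lemma between:
  assumes "strict_mono oc" "range oc = {i. occurs_at u v i}" "oc k < i" "i < oc (Suc k)"
  shows "\<not> occurs_at u v i"
proof
  assume "occurs_at u v i"
  then obtain m where m: "i = oc m" using assms(2) by (metis mem_Collect_eq rangeE)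
  then have "k < m" using assms(1,3) by (simp add: strict_mono_less)
  moreover have "m < Suc k" using assms(1,4) m by (simp add: strict_mono_less)
  ultimately show False by simp
qed

lemma ret_char:
  assumes sm: "strict_mono oc" and rg: "range oc = {i. occurs_at u v i}"
  shows "return_word u v r \<longleftrightarrow> (\<exists>k. r = map u [oc k..<oc (Suc k)])"
proof
  assume rw: "return_word u v r"
  then obtain i0 where i0: "occurs_at u (r @ v) i0" unfolding return_word_def factor_def by blast
  define S where "S = {i. i + length v \<le> length (r @ v) \<and> take (length v) (drop i (r @ v)) = v}"
  have S: "S = {i. i \<le> length r \<and> occurs_at u v (i0 + i)}" unfolding S_def by (rule S_eq[OF i0])
  have c2: "card S = 2" using rw unfolding return_word_def occ_count_def S_def by simp
  have "0 \<in> S" using rw unfolding S_def return_word_def by simp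
  have "length r \<in> S" unfolding S_def by simp
  have rn: "r \<noteq> []"
  proof
    assume "r = []"
    then have "S \<subseteq> {0}" using S by auto
    then have "card S \<le> card {0::nat}" using card_mono[of "{0::nat}" S] by simp
    then show False using c2 by simp
  qed
  have fin: "finite S" using S by simp
  have sub: "{0, length r} \<subseteq> S" using \<open>0 \<in> S\<close> \<open>length r \<in> S\<close> by simp
  moreover have "card {0, length r} = 2" using rn by simp
  ultimately have SS: "S = {0, length r}" using card_subset_eq[OF fin sub] c2 by simp
  have o1: "occurs_at u v i0" using \<open>0 \<in> S\<close> S by simp
  have o2: "occurs_at u v (i0 + length r)" using \<open>length r \<in> S\<close> S by simp
  obtain k where k: "i0 = oc k" using o1 rg by (metis mem_Collect_eq rangeE)
  obtain k' where k': "i0 + length r = oc k'" using o2 rg by (metis mem_Collect_eq rangeE)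
  have "length r > 0" using rn by simp
  then have "oc k < oc k'" using k k' by linarith
  then have "k < k'" using sm by (simp add: strict_mono_less)
  have kk: "k' = Suc k"
  proof (rule ccontr)
    assume "k' \<noteq> Suc k"
    then have "Suc k < k'" using \<open>k < k'\<close> by simp
    then have lt: "oc (Suc k) < oc k'" using sm by (simp add: strict_mono_less)
    have lt0: "oc k < oc (Suc k)" using sm by (simp add: strict_mono_less)
    have "occurs_at u v (oc (Suc k))" using rg by auto
    moreover have "i0 + (oc (Suc k) - i0) = oc (Suc k)" using k lt0 by simp
    moreover have "oc (Suc k) - i0 \<le> length r" using k k' lt by simp
    ultimately have "oc (Suc k) - i0 \<in> S" using S by simp
    then have "oc (Suc k) - i0 = 0 \<or> oc (Suc k) - i0 = length r" using SS by simp
    then show False using k k' lt lt0 by auto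
  qed
  have "map u [i0..<i0 + length (r @ v)] = r @ v" using i0 unfolding occurs_at_def by simp
  then have "take (length r) (map u [i0..<i0 + length (r @ v)]) = r" by simp
  then have "r = map u [i0..<i0 + length r]" by (simp add: take_map take_upt)
  then show "\<exists>k. r = map u [oc k..<oc (Suc k)]" using k k' kk by (intro exI[of _ k]) simp
next
  assume "\<exists>k. r = map u [oc k..<oc (Suc k)]"
  then obtain k where r: "r = map u [oc k..<oc (Suc k)]" by blast
  have lt: "oc k < oc (Suc k)" using sm by (simp add: strict_mono_less)
  have ok: "occurs_at u v (oc k)" "occurs_at u v (oc (Suc k))" using rg by auto
  have rv: "r @ v = map u [oc k..<oc (Suc k) + length v]"
    using r ok(2) lt seg_split[of "oc k" "oc (Suc k)" "oc (Suc k) + length v" u]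
    unfolding occurs_at_def by simp
  have lr: "length r = oc (Suc k) - oc k" using r by simp
  have i0: "occurs_at u (r @ v) (oc k)" unfolding occurs_at_def using rv lr lt by simp
  have "take (length v) (r @ v) = v"
  proof -
    have "take (length v) (r @ v) = map u [oc k..<oc k + length v]"
      using rv lt by (simp add: take_map take_upt)
    then show ?thesis using ok(1) unfolding occurs_at_def by simp
  qed
  moreover have "occ_count v (r @ v) = 2"
  proof -
    have "{i. i \<le> length r \<and> occurs_at u v (oc k + i)} = {0, length r}"
    proof (intro set_eqI iffI)
      fix i assume "i \<in> {i. i \<le> length r \<and> occurs_at u v (oc k + i)}"
      then have "i \<le> length r" "occurs_at u v (oc k + i)" by auto
      show "i \<in> {0, length r}"
      proof (rule ccontr)
        assume "i \<notin> {0, length r}"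
        then have "oc k < oc k + i" "oc k + i < oc (Suc k)" using \<open>i \<le> length r\<close> lr lt by auto
        then show False using between[OF sm rg] \<open>occurs_at u v (oc k + i)\<close> by blast
      qed
    next
      fix i assume "i \<in> {0, length r}"
      then show "i \<in> {i. i \<le> length r \<and> occurs_at u v (oc k + i)}" using ok lr lt by auto
    qed
    moreover have "length r \<noteq> 0" using lr lt by simp
    ultimately show ?thesis unfolding occ_count_def using S_eq[OF i0] by simp
  qed
  ultimately show "return_word u v r" unfolding return_word_def factor_def using i0 by blast
qed

lemma Inv_derived:
  assumes "Inv u v g"
  shows "\<exists>s. derived u v s \<and> fixed_point g s"
proof -
  obtain oc R s where sm: "strict_mono oc" and rg: "range oc = {i. occurs_at u v i}"
    and seg: "\<And>k. map u [oc k..<oc (Suc k)] = R (s k)" and R01: "R 0 \<noteq> R 1"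
    and fp: "fixed_point g s" and s0: "\<exists>k. s k = 0" and s1: "\<exists>k. s k = 1"
    using assms unfolding Inv_def by blast
  have s2: "s k < 2" for k using fp unfolding fixed_point_def by blast
  define rs where "rs = [R 0, R 1]"
  have rsn: "rs ! s k = R (s k)" for k using s2[of k] unfolding rs_def
    by (cases "s k = 0") (auto simp: less_2_cases_iff)
  have "set rs = {r. return_word u v r}"
  proof (intro set_eqI iffI)
    fix r assume "r \<in> set rs"
    then have "r = R 0 \<or> r = R 1" unfolding rs_def by auto
    then obtain k where "r = R (s k)" using s0 s1 by metis
    then show "r \<in> {r. return_word u v r}" using ret_char[OF sm rg] seg by auto
  next
    fix r assume "r \<in> {r. return_word u v r}"
    then obtain k where "r = R (s k)" using ret_char[OF sm rg] seg by auto
    then show "r \<in> set rs" using s2[of k] unfolding rs_def by (auto simp: less_2_cases_iff)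
  qed
  moreover have "distinct rs" using R01 unfolding rs_def by simp
  moreover have "\<forall>j. s j < length rs" using s2 unfolding rs_def by (simp add: eval_nat_numeral)
  moreover have L: "(LEAST i. occurs_at u v i) = oc 0"
  proof (rule Least_equality)
    show "occurs_at u v (oc 0)" using rg by auto
  next
    fix i assume "occurs_at u v i"
    then obtain m where "i = oc m" using rg by (metis mem_Collect_eq rangeE)
    then show "oc 0 \<le> i" using sm by (simp add: strict_mono_less_eq)
  qed
  moreover have C: "concat (map (\<lambda>j. rs ! s j) [0..<n]) = map u [oc 0..<oc n]" for n
  proof (induction n)
    case (Suc n)
    have "oc 0 \<le> oc n" "oc n \<le> oc (Suc n)" using sm by (auto simp: strict_mono_less_eq)
    then have "map u [oc 0..<oc (Suc n)] = map u [oc 0..<oc n] @ map u [oc n..<oc (Suc n)]"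
      by (rule seg_split)
    then show ?case using Suc rsn seg by simp
  qed simp
  moreover have "oc 0 \<le> oc n" for n using sm by (simp add: strict_mono_less_eq)
  ultimately have "derived u v s" unfolding derived_def Let_def by auto
  then show ?thesis using fp by blast
qed


lemma ext_mid: "ext mid z = z" by (induction z) (auto simp: mid_def)

lemma gen_ne: "ne (gen_morph g)" by (cases g) (auto simp: ne_def)

lemma phi_ne: "ne (phi w)"
proof (induction w)
  case Nil then show ?case by (simp add: ne_def mid_def)
next
  case (Cons g w) then show ?case by (simp add: ne_mcomp[OF gen_ne])
qed

lemma gen_lt2: "\<forall>x\<in>set (gen_morph g c). x < 2" by (cases g) auto

lemma ext_set: "set (ext f z) = (\<Union>c\<in>set z. set (f c))" by (auto simp: ext_def)

lemma phi_lt2: "c < 2 \<Longrightarrow> \<forall>x\<in>set (phi w c). x < 2"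
proof (induction w arbitrary: c)
  case Nil then show ?case by (simp add: mid_def)
next
  case (Cons g w) then show ?case using gen_lt2 by (simp add: mcomp_def ext_set)
qed

lemma img_lt2:
  assumes "ne f" "\<And>c. c < 2 \<Longrightarrow> \<forall>x\<in>set (f c). x < 2" "\<And>i. u i < 2"
  shows "img f u i < 2"
proof -
  have L: "Suc i \<le> length (ext f (map u [0..<Suc i]))"
    using length_ext_ge[OF assms(1), of "map u [0..<Suc i]"] by simp
  define xs where "xs = map u [0..<Suc i]"
  have L': "i < length (ext f xs)" using L unfolding xs_def by simp
  have "\<forall>c\<in>set xs. c < 2" unfolding xs_def using assms(3) by simp
  then have "\<forall>x\<in>set (ext f xs). x < 2" using assms(2) unfolding ext_set by blast
  then have "ext f xs ! i < 2" using nth_mem[OF L'] by blast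
  then show ?thesis unfolding img_def xs_def .
qed

lemma phi_snoc: "phi (xs @ [g]) = mcomp (phi xs) (gen_morph g)"
proof (induction xs)
  case Nil
  show ?case by (rule ext) (simp add: mcomp_def mid_def ext_mid[unfolded mid_def])
next
  case (Cons x xs)
  show ?case by (rule ext) (simp add: Cons mcomp_def ext_mcomp[symmetric])
qed

definition a_of :: "gen \<Rightarrow> nat" where "a_of g = (if g = Gb then 0 else 1)"

lemma blk_inst: "g \<in> {Gb, Gbeta} \<Longrightarrow> (\<And>i. y i < 2) \<Longrightarrow> blk (gen_morph g) (a_of g) y"
  unfolding blk_def a_of_def using gen_ne
  by (auto simp: less_2_cases_iff)

lemma desub:
  assumes sg: "set (g # w'') \<subseteq> {Gb, Gbeta}" and fp: "fixed_point (phi (g # w'')) u"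
  shows "blk (gen_morph g) (a_of g) (img (phi w'') u) \<and> blk.u (gen_morph g) (img (phi w'') u) = u
     \<and> fixed_point (phi (w'' @ [g])) (img (phi w'') u)"
proof -
  have uu0: "(\<forall>i. u i < 2) \<and> img (phi (g # w'')) u = u"
    using fp fixed_point_iff[OF phi_ne, of "g # w''" u] by blast
  then have u2: "\<And>i. u i < 2" and uu: "img (phi (g # w'')) u = u" by blast+
  define y where "y = img (phi w'') u"
  have y2: "\<And>i. y i < 2" unfolding y_def by (rule img_lt2[OF phi_ne phi_lt2 u2])
  have B: "blk (gen_morph g) (a_of g) y" using sg y2 by (intro blk_inst) auto
  have U: "img (gen_morph g) y = u"
    using uu img_mcomp[OF gen_ne phi_ne] unfolding y_def by simp
  have "img (phi (w'' @ [g])) y = img (phi w'') (img (gen_morph g) y)"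
    by (simp add: phi_snoc img_mcomp[OF phi_ne gen_ne])
  also have "\<dots> = y" using U y_def by simp
  finally have "fixed_point (phi (w'' @ [g])) y" using fixed_point_iff[OF phi_ne] y2 by blast
  then show ?thesis using B U blk.u_def[OF B] unfolding y_def by simp
qed

lemma phi_has0: "set z \<subseteq> {Gb, Gbeta} \<Longrightarrow> Gb \<in> set z \<Longrightarrow> 0 \<in> set (phi z c)"
proof (induction z arbitrary: c)
  case (Cons g z)
  have nz: "phi z c \<noteq> []" using phi_ne unfolding ne_def by blast
  then obtain d r where d: "phi z c = d # r" by (cases "phi z c") auto
  show ?case
  proof (cases "g = Gb")
    case True then show ?thesis using d by (simp add: mcomp_def)
  next
    case False
    then have "g = Gbeta" "Gb \<in> set z" "set z \<subseteq> {Gb, Gbeta}" using Cons.prems by auto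
    then have "0 \<in> set (phi z c)" using Cons.IH by blast
    then show ?thesis using \<open>g = Gbeta\<close> by (auto simp: mcomp_def ext_set intro!: bexI[of _ 0])
  qed
qed simp

lemma phi_has1: "set z \<subseteq> {Gb, Gbeta} \<Longrightarrow> Gbeta \<in> set z \<Longrightarrow> 1 \<in> set (phi z c)"
proof (induction z arbitrary: c)
  case (Cons g z)
  have nz: "phi z c \<noteq> []" using phi_ne unfolding ne_def by blast
  then obtain d r where d: "phi z c = d # r" by (cases "phi z c") auto
  show ?case
  proof (cases "g = Gbeta")
    case True then show ?thesis using d by (simp add: mcomp_def)
  next
    case False
    then have "g = Gb" "Gbeta \<in> set z" "set z \<subseteq> {Gb, Gbeta}" using Cons.prems by auto
    then have "1 \<in> set (phi z c)" using Cons.IH by blast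
    then show ?thesis using \<open>g = Gb\<close> by (auto simp: mcomp_def ext_set intro!: bexI[of _ 1])
  qed
qed simp

lemma fp_letters:
  assumes sw: "set w' = {Gb, Gbeta}" and fp: "fixed_point (phi w') u"
  shows "(\<exists>k. u k = 0) \<and> (\<exists>k. u k = 1)"
proof -
  have "ext (phi w') (map u [0..<1]) = map u [0..<length (ext (phi w') (map u [0..<1]))]"
    using fp unfolding fixed_point_def by blast
  then have e: "phi w' (u 0) = map u [0..<length (phi w' (u 0))]" by simp
  have "0 \<in> set (phi w' (u 0))" "1 \<in> set (phi w' (u 0))"
    using phi_has0[of w'] phi_has1[of w'] sw by auto
  then have "0 \<in> set (map u [0..<length (phi w' (u 0))])" "1 \<in> set (map u [0..<length (phi w' (u 0))])"
    by (metis e)+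
  then show ?thesis by auto
qed

lemma Inv_base:
  assumes sw: "set w' = {Gb, Gbeta}" and fp: "fixed_point (phi w') u"
  shows "Inv u [] (phi w')"
proof -
  have "strict_mono (id :: nat \<Rightarrow> nat)" by (simp add: strict_mono_def)
  moreover have "range id = {i. occurs_at u [] i}" by (auto simp: occurs_at_def)
  moreover have "\<forall>k. map u [id k..<id (Suc k)] = (\<lambda>c. [c]) (u k)" by simp
  moreover have "(\<lambda>c. [c]) (0::nat) \<noteq> (\<lambda>c. [c]) 1" by simp
  ultimately show ?thesis unfolding Inv_def using fp fp_letters[OF sw fp]
    by (intro exI[of _ id] exI[of _ "\<lambda>c::nat. [c]"] exI[of _ u]) simp
qed


lemma rot_step:
  assumes sw: "set w = {Gb, Gbeta}" and fp: "fixed_point (phi (rotate k w)) u"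
  shows "\<exists>g w'' y. rotate k w = g # w'' \<and> g \<in> {Gb, Gbeta} \<and> blk (gen_morph g) (a_of g) y \<and>
     blk.u (gen_morph g) y = u \<and> fixed_point (phi (rotate (Suc k) w)) y"
proof -
  have "rotate k w \<noteq> []" using sw by (metis empty_iff insertI1 list.set(1) set_rotate)
  then obtain g w'' where gw: "rotate k w = g # w''" by (cases "rotate k w") auto
  have sg: "set (g # w'') \<subseteq> {Gb, Gbeta}" using gw sw by (metis set_rotate order_refl)
  have D: "blk (gen_morph g) (a_of g) (img (phi w'') u) \<and> blk.u (gen_morph g) (img (phi w'') u) = u
     \<and> fixed_point (phi (w'' @ [g])) (img (phi w'') u)" using desub[OF sg] fp gw by simp
  have "rotate (Suc k) w = w'' @ [g]" using gw by simp
  then show ?thesis using D gw sg by (intro exI[of _ g] exI[of _ w''] exI[of _ "img (phi w'') u"]) simp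
qed

definition gen_of :: "nat \<Rightarrow> gen" where "gen_of c = (if c = 0 then Gb else Gbeta)"

lemma a_of_gen: "g \<in> {Gb, Gbeta} \<Longrightarrow> c < 2 \<Longrightarrow> a_of g = c \<longleftrightarrow> g = gen_of c"
  unfolding a_of_def gen_of_def by (auto simp: less_2_cases_iff)

lemma fp_lt2: "fixed_point f u \<Longrightarrow> u i < 2" unfolding fixed_point_def by blast

lemma factor_lt2: "fixed_point f u \<Longrightarrow> factor v u \<Longrightarrow> c \<in> set v \<Longrightarrow> c < 2"
  unfolding factor_def occurs_at_def using fp_lt2 by (metis ex_map_conv)

lemma SL0:
  assumes sw: "set w = {Gb, Gbeta}" and fp: "fixed_point (phi (rotate k w)) u" and c2: "c < 2"
    and fc: "factor [c] u" and hd: "hd (rotate k w) = gen_of c"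
  shows "\<exists>G\<in>{phi (rotate k w) | k. True}. Inv u [c] G"
proof -
  obtain g w'' y where gw: "rotate k w = g # w''" and g: "g \<in> {Gb, Gbeta}"
    and B: "blk (gen_morph g) (a_of g) y" and U: "blk.u (gen_morph g) y = u"
    and fy: "fixed_point (phi (rotate (Suc k) w)) y"
    using rot_step[OF sw fp] by blast
  have ac: "a_of g = c" using a_of_gen[OF g c2] hd gw by simp
  have I: "Inv y [] (phi (rotate (Suc k) w))" using Inv_base[OF _ fy] sw by simp
  have X: "blk.X (a_of g) [c] = []" using blk.X_a[OF B] ac by simp
  have "Inv (blk.u (gen_morph g) y) [c] (phi (rotate (Suc k) w))"
    by (rule blk.Inv_transfer[OF B]) (use fc U I X in auto)
  then show ?thesis using U by blast
qed

lemma SL: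
  assumes sw: "set w = {Gb, Gbeta}" and c2: "c < 2"
  shows "\<forall>k u. fixed_point (phi (rotate k w)) u \<longrightarrow> gen_of c \<in> set (take (Suc m) (rotate k w)) \<longrightarrow>
     factor [c] u \<longrightarrow> (\<exists>G\<in>{phi (rotate k w) | k. True}. Inv u [c] G)"
proof (induction m)
  case 0
  show ?case
  proof (intro allI impI)
    fix k u assume fp: "fixed_point (phi (rotate k w)) u" and m: "gen_of c \<in> set (take (Suc 0) (rotate k w))"
      and fc: "factor [c] u"
    have "rotate k w \<noteq> []" using sw by (metis empty_iff insertI1 list.set(1) set_rotate)
    then have "hd (rotate k w) = gen_of c" using m by (cases "rotate k w") auto
    then show "\<exists>G\<in>{phi (rotate k w) | k. True}. Inv u [c] G" using SL0[OF sw fp c2 fc] by blast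
  qed
next
  case (Suc m)
  show ?case
  proof (intro allI impI)
    fix k u assume fp: "fixed_point (phi (rotate k w)) u" and m: "gen_of c \<in> set (take (Suc (Suc m)) (rotate k w))"
      and fc: "factor [c] u"
    obtain g w'' y where gw: "rotate k w = g # w''" and g: "g \<in> {Gb, Gbeta}"
      and B: "blk (gen_morph g) (a_of g) y" and U: "blk.u (gen_morph g) y = u"
      and fy: "fixed_point (phi (rotate (Suc k) w)) y"
      using rot_step[OF sw fp] by blast
    show "\<exists>G\<in>{phi (rotate k w) | k. True}. Inv u [c] G"
    proof (cases "g = gen_of c")
      case True
      then show ?thesis using SL0[OF sw fp c2 fc] gw by simp
    next
      case False
      have ac: "a_of g \<noteq> c" using a_of_gen[OF g c2] False by simp
      have X: "blk.X (a_of g) [c] = [c]" using blk.X_def[OF B] ac by simp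
      have fc': "factor [c] (blk.u (gen_morph g) y)" using fc U by simp
      have fy': "factor [c] y" using blk.X_factor[OF B fc'] X by simp
      have "gen_of c \<in> set (take (Suc m) w'')" using m gw False by simp
      then have "gen_of c \<in> set (take (Suc m) (rotate (Suc k) w))" using gw
        by (auto simp: take_append)
      then obtain G where G: "G \<in> {phi (rotate k w) | k. True}" "Inv y [c] G"
        using Suc.IH fy fy' by blast
      have "Inv (blk.u (gen_morph g) y) [c] G"
        by (rule blk.Inv_transfer[OF B]) (use fc' G X in auto)
      then show ?thesis using U G by blast
    qed
  qed
qed

lemma MainL:
  assumes sw: "set w = {Gb, Gbeta}"
  shows "\<forall>k u. fixed_point (phi (rotate k w)) u \<longrightarrow> factor v u \<longrightarrow>
     (\<exists>G\<in>{phi (rotate k w) | k. True}. Inv u v G)"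
proof (induction "length v" arbitrary: v rule: less_induct)
  case less
  show ?case
  proof (intro allI impI)
    fix k u assume fp: "fixed_point (phi (rotate k w)) u" and fv: "factor v u"
    show "\<exists>G\<in>{phi (rotate k w) | k. True}. Inv u v G"
    proof (cases v)
      case Nil
      then show ?thesis using Inv_base[OF _ fp] sw by auto
    next
      case (Cons c v')
      have c2: "c < 2" using factor_lt2[OF fp fv] Cons by simp
      show ?thesis
      proof (cases v')
        case Nil
        have "gen_of c \<in> set (rotate k w)" using sw unfolding gen_of_def by simp
        then have "gen_of c \<in> set (take (Suc (length w)) (rotate k w))" by simp
        then show ?thesis using SL[OF sw c2] fp fv Cons Nil by blast
      next
        case (Cons d rest)
        obtain g w'' y where gw: "rotate k w = g # w''" and g: "g \<in> {Gb, Gbeta}"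
          and B: "blk (gen_morph g) (a_of g) y" and U: "blk.u (gen_morph g) y = u"
          and fy: "fixed_point (phi (rotate (Suc k) w)) y"
          using rot_step[OF sw fp] by blast
        have vn: "v \<noteq> []" using \<open>v = c # v'\<close> by simp
        have fv': "factor v (blk.u (gen_morph g) y)" using fv U by simp
        have "length (blk.X (a_of g) v) < length v"
          using blk.X_len[OF B vn] c2 \<open>v = c # v'\<close> Cons by auto
        moreover have "factor (blk.X (a_of g) v) y" using blk.X_factor[OF B fv' vn] .
        ultimately obtain G where G: "G \<in> {phi (rotate k w) | k. True}" "Inv y (blk.X (a_of g) v) G"
          using less.hyps fy by blast
        have "Inv (blk.u (gen_morph g) y) v G"
          by (rule blk.Inv_transfer[OF B fv' vn G(2)])
        then show ?thesis using U G by blast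
      qed
    qed
  qed
qed


lemma mpow_fix: "f c = [c] \<Longrightarrow> mpow f n c = [c]"
  by (induction n) (auto simp: mid_def mcomp_def)

lemma phi_only_b: "set z \<subseteq> {Gb} \<Longrightarrow> phi z 0 = [0]"
proof (induction z)
  case Nil then show ?case by (simp add: mid_def)
next
  case (Cons g z)
  then have "g = Gb" "set z \<subseteq> {Gb}" by auto
  then show ?case using Cons.IH by (simp add: mcomp_def)
qed

lemma phi_only_beta: "set z \<subseteq> {Gbeta} \<Longrightarrow> phi z 1 = [1]"
proof (induction z)
  case Nil then show ?case by (simp add: mid_def)
next
  case (Cons g z)
  then have "g = Gbeta" "set z \<subseteq> {Gbeta}" by auto
  then show ?case using Cons.IH by (simp add: mcomp_def)
qed

lemma prim_both:
  assumes sw: "set w \<subseteq> {Gb, Gbeta}" and pr: "primitive (phi w)"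
  shows "set w = {Gb, Gbeta}"
proof -
  obtain n where n: "\<forall>a<2. \<forall>b<2. b \<in> set (mpow (phi w) n a)" using pr unfolding primitive_def by blast
  have "Gbeta \<in> set w"
  proof (rule ccontr)
    assume "Gbeta \<notin> set w"
    then have "set w \<subseteq> {Gb}" using sw by auto
    then have "mpow (phi w) n 0 = [0]" by (rule mpow_fix[of "phi w" 0, OF phi_only_b])
    then show False using n[rule_format, of 0 1] by simp
  qed
  moreover have "Gb \<in> set w"
  proof (rule ccontr)
    assume "Gb \<notin> set w"
    then have "set w \<subseteq> {Gbeta}" using sw by auto
    then have "mpow (phi w) n 1 = [1]" by (rule mpow_fix[of "phi w" 1, OF phi_only_beta])
    then show False using n[rule_format, of 1 0] by simp
  qed
  ultimately show ?thesis using sw by auto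
qed

lemma mpow_one: "mpow f (Suc 0) c = f c"
  by (simp add: mcomp_def mid_def)

lemma prim_good: "set w' = {Gb, Gbeta} \<Longrightarrow> primitive (phi w')"
  unfolding primitive_def
proof (intro exI[of _ "Suc 0"] allI impI)
  fix a b :: nat assume sw: "set w' = {Gb, Gbeta}" and "a < 2" and b2: "b < 2"
  have "b = 0 \<or> b = 1" using b2 by arith
  moreover have "0 \<in> set (phi w' a)" using phi_has0[of w' a] sw by simp
  moreover have "1 \<in> set (phi w' a)" using phi_has1[of w' a] sw by simp
  ultimately show "b \<in> set (mpow (phi w') (Suc 0) a)" unfolding mpow_one by blast
qed

lemma mpow_len:
  assumes "ne f" "f c = c # x" "x \<noteq> []"
  shows "\<exists>r. mpow f n c = c # r \<and> n \<le> length r"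
proof (induction n)
  case 0 then show ?case by (simp add: mid_def)
next
  case (Suc n)
  then obtain r where r: "mpow f n c = c # r" "n \<le> length r" by blast
  have "mpow f (Suc n) c = c # (x @ ext f r)" using r assms(2) by (simp add: mcomp_def)
  moreover have "length r \<le> length (ext f r)" using length_ext_ge[OF assms(1)] .
  moreover have "length x \<ge> 1" using assms(3) by (cases x) auto
  ultimately show ?case using r(2) by (intro exI[of _ "x @ ext f r"]) simp
qed

lemma gen_hd: "g \<in> {Gb, Gbeta} \<Longrightarrow> \<exists>t. gen_morph g d = a_of g # t"
proof -
  assume "g \<in> {Gb, Gbeta}"
  then have "g = Gb \<or> g = Gbeta" by simp
  then show ?thesis
  proof
    assume g: "g = Gb"
    have "gen_morph Gb d = 0 # (if d = 0 then [] else [1])" by simp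
    then show ?thesis using g unfolding a_of_def by (intro exI) simp
  next
    assume g: "g = Gbeta"
    have "gen_morph Gbeta d = 1 # (if d = 0 then [0] else [])" by simp
    then show ?thesis using g unfolding a_of_def by (intro exI) simp
  qed
qed

lemma subst_good:
  assumes sw: "set w' = {Gb, Gbeta}"
  shows "substitution (phi w')"
proof -
  have "w' \<noteq> []" using sw by (metis empty_iff insertI1 list.set(1))
  then obtain g w'' where gw: "w' = g # w''" by (cases w') auto
  have g: "g \<in> {Gb, Gbeta}" using sw gw by (metis list.set_intros(1))
  define c where "c = a_of g"
  have c2: "c < 2" unfolding c_def a_of_def by simp
  have "phi w'' c \<noteq> []" using phi_ne unfolding ne_def by blast
  then obtain d r where dr: "phi w'' c = d # r" by (cases "phi w'' c") auto
  obtain t where t: "gen_morph g d = c # t" using gen_hd[OF g] unfolding c_def by blast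
  define x where "x = t @ ext (gen_morph g) r"
  have pc: "phi w' c = c # x" unfolding x_def using gw dr t by (simp add: mcomp_def)
  have xn: "x \<noteq> []"
  proof
    assume "x = []"
    then have "set (phi w' c) = {c}" using pc by simp
    moreover have "0 \<in> set (phi w' c)" using phi_has0[of w' c] sw by simp
    moreover have "1 \<in> set (phi w' c)" using phi_has1[of w' c] sw by simp
    ultimately show False by simp
  qed
  have "filterlim (\<lambda>n. length (mpow (phi w') n c)) at_top sequentially"
    unfolding filterlim_at_top eventually_sequentially
  proof
    fix Z
    show "\<exists>N. \<forall>n\<ge>N. Z \<le> length (mpow (phi w') n c)"
    proof (intro exI[of _ Z] allI impI)
      fix n assume "Z \<le> n"
      obtain r where "mpow (phi w') n c = c # r" "n \<le> length r" using mpow_len[OF phi_ne pc xn] by blast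
      then show "Z \<le> length (mpow (phi w') n c)" using \<open>Z \<le> n\<close> by simp
    qed
  qed
  then have "c < 2 \<and> x \<noteq> [] \<and> phi w' c = c # x \<and>
      filterlim (\<lambda>n. length (mpow (phi w') n c)) at_top sequentially" using c2 pc xn by simp
  then show ?thesis unfolding substitution_def by blast
qed

lemma finite_rot: "finite {phi (rotate k w) | k. True}"
proof -
  have "{phi (rotate k w) | k. True} \<subseteq> (\<lambda>k. phi (rotate k w)) ` {..<length w} \<union> {phi w}"
  proof
    fix f assume "f \<in> {phi (rotate k w) | k. True}"
    then obtain k where k: "f = phi (rotate k w)" by blast
    show "f \<in> (\<lambda>k. phi (rotate k w)) ` {..<length w} \<union> {phi w}"
    proof (cases "w = []")
      case True then show ?thesis using k by simp
    next
      case False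
      then have "k mod length w < length w" by simp
      moreover have "f = phi (rotate (k mod length w) w)" using k rotate_conv_mod by metis
      ultimately show ?thesis by blast
    qed
  qed
  then show ?thesis by (rule finite_subset) simp
qed

theorem claim25:
  fixes w :: "gen list"
  assumes "set w \<subseteq> {Gb, Gbeta}"
    and "primitive (phi w)"
  shows "closed_under_derivation {phi (rotate k w) | k. True}"
proof -
  have sw: "set w = {Gb, Gbeta}" using prim_both assms by blast
  have A: "\<forall>f\<in>{phi (rotate k w) | k. True}. primitive f \<and> substitution f"
  proof
    fix f assume "f \<in> {phi (rotate k w) | k. True}"
    then obtain k where k: "f = phi (rotate k w)" by blast
    have "set (rotate k w) = {Gb, Gbeta}" using sw by simp
    then show "primitive f \<and> substitution f" using prim_good subst_good k by blast
  qed
  have B: "\<forall>f\<in>{phi (rotate k w) | k. True}. \<forall>u. fixed_point f u \<longrightarrow> (\<forall>v. factor v u \<longrightarrow>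
        (\<exists>s. derived u v s \<and> (\<exists>g\<in>{phi (rotate k w) | k. True}. fixed_point g s)))"
  proof (intro ballI allI impI)
    fix f u v assume f: "f \<in> {phi (rotate k w) | k. True}" and fp: "fixed_point f u" and fv: "factor v u"
    obtain k where k: "f = phi (rotate k w)" using f by blast
    obtain G where G: "G \<in> {phi (rotate k w) | k. True}" "Inv u v G"
      using MainL[OF sw] fp fv k by blast
    obtain s where "derived u v s" "fixed_point G s" using Inv_derived[OF G(2)] by blast
    then show "\<exists>s. derived u v s \<and> (\<exists>g\<in>{phi (rotate k w) | k. True}. fixed_point g s)"
      using G(1) by blast
  qed
  show ?thesis unfolding closed_under_derivation_def using finite_rot A B by blast
qed

end
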